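(* Let $\lambda$ and $g$ be as in the context. There exist universal constants $E,E'>1$ such that for every integer $j\ge0$, \[ E\lambda^{j}\le\left|\frac{\mathrm{d}\left(\left[(-\lambda)g\right]^{j}\circ g\right)}{\mathrm{d}x}(x)\right|\le E'\lambda^{j} \] for all $x$ with $\lambda^{-(j+1)}\le|x|\le\lambda^{-j}$, where $\left[(-\lambda)g\right]^{j}$ is the $j$-fold composition of $x\mapsto(-\lambda)g(x)$.
   Context: There is a unique constant $\lambda=2.5029\ldots$ and a unique infinitely (period-doubling) renormalizable analytic unimodal map $g:[-1,1]\to[-1,1]$ solving $g(x)=-\lambda\, g^{2}(-x/\lambda)$ for $-1\le x\le1$ ($g^2=g\circ g$). Unimodal means: $-1$ is the unique fixed point with positive multiplier, $g(1)=-1$, and $g$ has a unique maximum at an interior nondegenerate critical point $c^{(0)}$. Moreover $g$ is analytic near $[-1,1]$, even, concave on $[-c^{(1)},c^{(1)}]$ where $c^{(1)}=g(c^{(0)})$, satisfies $g(c^{(1)})=-c^{(1)}/\lambda$, $g'(c^{(1)})=-\lambda$, and has negative Schwarzian derivative. *)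

theory Defs
  imports "HOL-Analysis.Analysis" "HOL-Complex_Analysis.Complex_Analysis"
begin

definition analytic_near_interval :: "(real \<Rightarrow> real) \<Rightarrow> bool" where
  "analytic_near_interval g \<longleftrightarrow>
     (\<exists>G S. open S \<and> complex_of_real ` {-1..1} \<subseteq> S \<and> G holomorphic_on S \<and>
        (\<forall>x. complex_of_real x \<in> S \<longrightarrow> G (complex_of_real x) = complex_of_real (g x)))"

definition schwarzian :: "(real \<Rightarrow> real) \<Rightarrow> real \<Rightarrow> real" where
  "schwarzian g x =
     (deriv ^^ 3) g x / deriv g x - 3/2 * ((deriv ^^ 2) g x / deriv g x)^2"

definition unimodal :: "(real \<Rightarrow> real) \<Rightarrow> real \<Rightarrow> bool" where
  "unimodal g c0 \<longleftrightarrow>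
     g ` {-1..1} \<subseteq> {-1..1} \<and>
     g (-1) = -1 \<and> deriv g (-1) > 0 \<and>
     (\<forall>x\<in>{-1..1}. g x = x \<and> deriv g x > 0 \<longrightarrow> x = -1) \<and>
     g 1 = -1 \<and>
     c0 \<in> {-1<..<1} \<and> (\<forall>x\<in>{-1..1}. x \<noteq> c0 \<longrightarrow> g x < g c0) \<and>
     deriv g c0 = 0 \<and> (deriv ^^ 2) g c0 \<noteq> 0"

definition feigenbaum_fixed_point :: "real \<Rightarrow> (real \<Rightarrow> real) \<Rightarrow> bool" where
  "feigenbaum_fixed_point lam g \<longleftrightarrow>
     2.5029 \<le> lam \<and> lam < 2.5030 \<and>
     (\<forall>x\<in>{-1..1}. g x = - lam * g (g (- x / lam))) \<and>
     analytic_near_interval g \<and>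
     (\<exists>c0. unimodal g c0 \<and>
        (let c1 = g c0 in
           concave_on {-c1..c1} g \<and> g c1 = - c1 / lam \<and> deriv g c1 = - lam)) \<and>
     (\<forall>x\<in>{-1..1}. g (- x) = g x) \<and>
     (\<forall>x\<in>{-1..1}. deriv g x \<noteq> 0 \<longrightarrow> schwarzian g x < 0)"

end

theory Submission imports Defs begin

lemma an_deriv:
  assumes "analytic_near_interval g" "x \<in> {-1..1}"
  shows "(g has_real_derivative deriv g x) (at x)"
proof -
  obtain G S where S: "open S" "complex_of_real ` {-1..1} \<subseteq> S" "G holomorphic_on S"
    "\<And>x. complex_of_real x \<in> S \<Longrightarrow> G (complex_of_real x) = complex_of_real (g x)"
    using assms(1) unfolding analytic_near_interval_def by blast
  have xS: "complex_of_real x \<in> S" using S(2) assms(2) by auto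
  then obtain G' where G': "(G has_field_derivative G') (at (complex_of_real x))"
    using holomorphic_on_imp_differentiable_at[OF S(3) S(1)] field_differentiable_def by blast
  have "((\<lambda>t. G (of_real t)) has_vector_derivative G') (at x)"
    using has_vector_derivative_real_field[OF G'] by blast
  then have "((\<lambda>t. Re (G (of_real t))) has_vector_derivative Re G') (at x)"
    by (rule bounded_linear.has_vector_derivative[OF bounded_linear_Re])
  then have d: "((\<lambda>t. Re (G (of_real t))) has_real_derivative Re G') (at x)"
    by (simp add: has_real_derivative_iff_has_vector_derivative)
  have U: "open (complex_of_real -` S)"
    by (rule open_vimage[OF S(1)]) (auto intro: continuous_intros)
  have "(g has_real_derivative Re G') (at x)"
    apply (rule has_field_derivative_transform_within_open[OF d U])
    using xS S(4) by auto
  then show ?thesis using DERIV_imp_deriv by metis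
qed

lemma deriv_agree:
  fixes f h :: "real \<Rightarrow> real"
  assumes "(f has_real_derivative D1) (at x)" "(h has_real_derivative D2) (at x)"
    "a < b" "x \<in> {a..b}" "\<And>y. y \<in> {a..b} \<Longrightarrow> f y = h y"
  shows "D1 = D2"
proof -
  have 1: "(f has_real_derivative D1) (at x within {a..b})"
    using assms(1) by (rule has_field_derivative_at_within)
  have "(h has_real_derivative D2) (at x within {a..b})"
    using assms(2) by (rule has_field_derivative_at_within)
  then have 2: "(f has_real_derivative D2) (at x within {a..b})"
    by (rule has_field_derivative_transform_within[where d=1]) (use assms in auto)
  have "at x within {a..b} \<noteq> bot"
    using assms(3,4) by (simp add: trivial_limit_within)
  then show ?thesis using has_field_derivative_unique[OF 1 2] by blast
qed

lemma concave_secant: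
  fixes f :: "real \<Rightarrow> real"
  assumes cv: "concave_on {a..b} f" and xy: "a \<le> x" "x < y" "y \<le> b"
    and dx: "(f has_real_derivative Dx) (at x)" and dy: "(f has_real_derivative Dy) (at y)"
  shows "(f y - f x) / (y - x) \<le> Dx" "Dy \<le> (f y - f x) / (y - x)"
proof -
  have cvx: "convex_on {a..b} (\<lambda>t. - f t)" using cv by (simp add: concave_on_def)
  have sl: "(f t - f x) / (t - x) \<ge> (f y - f x) / (y - x) \<and> (f y - f x) / (y - x) \<ge> (f y - f t)/(y - t)"
    if "x < t" "t < y" for t
  proof -
    have A: "((- f x) - (- f t)) / (x - t) \<le> ((- f x) - (- f y)) / (x - y)"
      and B: "((- f x) - (- f y)) / (x - y) \<le> ((- f t) - (- f y)) / (t - y)"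
      using convex_on_slope_le[OF cvx, of x y t] that xy by auto
    have e1: "((- f x) - (- f t)) / (x - t) = - ((f t - f x) / (t - x))"
      using that by (simp add: field_simps)
    have e2: "((- f x) - (- f y)) / (x - y) = - ((f y - f x) / (y - x))"
      using that by (simp add: field_simps)
    have e3: "((- f t) - (- f y)) / (t - y) = - ((f y - f t) / (y - t))"
      using that by (simp add: field_simps)
    show ?thesis using A B e1 e2 e3 by simp
  qed
  have "((\<lambda>t. (f t - f x) / (t - x)) \<longlongrightarrow> Dx) (at x within {x<..})"
    using has_field_derivative_at_within[OF dx] has_field_derivative_iff by blast
  moreover have "eventually (\<lambda>t. (f y - f x) / (y - x) \<le> (f t - f x) / (t - x)) (at x within {x<..})"
    using eventually_at_right_real[OF xy(2)] sl by (auto elim: eventually_mono)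
  ultimately show "(f y - f x) / (y - x) \<le> Dx"
    by (intro tendsto_lowerbound) auto
  have "((\<lambda>t. (f t - f y) / (t - y)) \<longlongrightarrow> Dy) (at y within {..<y})"
    using has_field_derivative_at_within[OF dy] has_field_derivative_iff by blast
  moreover have "eventually (\<lambda>t. (f t - f y) / (t - y) \<le> (f y - f x) / (y - x)) (at y within {..<y})"
  proof -
    have "eventually (\<lambda>t. t \<in> {x<..<y}) (at_left y)" using eventually_at_left_real[OF xy(2)] .
    then show ?thesis
    proof (rule eventually_mono)
      fix t assume t: "t \<in> {x<..<y}"
      have "(f t - f y) / (t - y) = (f y - f t) / (y - t)" using t by (simp add: field_simps)
      then show "(f t - f y) / (t - y) \<le> (f y - f x) / (y - x)" using sl[of t] t by auto
    qed
  qed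
  ultimately show "Dy \<le> (f y - f x) / (y - x)"
    by (intro tendsto_upperbound) auto
qed

lemma deriv_loc_const:
  fixes f :: "real \<Rightarrow> real"
  assumes "open U" "x \<in> U" "\<And>y. y \<in> U \<Longrightarrow> f y = c"
  shows "deriv f x = 0"
proof -
  have "((\<lambda>_. c) has_real_derivative 0) (at x)" by simp
  then have "(f has_real_derivative 0) (at x)"
    by (rule has_field_derivative_transform_within_open[OF _ assms(1,2)]) (use assms(3) in auto)
  then show ?thesis by (rule DERIV_imp_deriv)
qed

lemma iter_eq:
  fixes g :: "real \<Rightarrow> real" and lam :: real
  assumes lam: "lam > 1" and fe: "\<forall>x\<in>{-1..1}. g x = - lam * g (g (- x / lam))"
    and ev: "\<forall>x\<in>{-1..1}. g (- x) = g x"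
  shows "\<forall>x. \<bar>lam^j * x\<bar> \<le> 1 \<longrightarrow> ((\<lambda>y. (- lam) * g y) ^^ j) (g x) = g (lam^j * x)"
proof (induction j)
  case 0
  then show ?case by simp
next
  case (Suc j)
  show ?case
  proof (intro allI impI)
    fix x assume h: "\<bar>lam ^ Suc j * x\<bar> \<le> 1"
    have "\<bar>lam ^ j * x\<bar> \<le> \<bar>lam ^ Suc j * x\<bar>"
      using lam by (simp add: abs_mult mult_right_mono)
    then have hj: "\<bar>lam ^ j * x\<bar> \<le> 1" using h by linarith
    have X: "- (lam ^ Suc j * x) \<in> {-1..1}" using h by auto
    have e1: "- (- (lam ^ Suc j * x)) / lam = lam ^ j * x" using lam by simp
    have "g (- (lam ^ Suc j * x)) = - lam * g (g (lam ^ j * x))"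
      using fe X e1 by metis
    moreover have "g (- (lam ^ Suc j * x)) = g (lam ^ Suc j * x)"
      using ev h by (metis X minus_minus)
    ultimately show "((\<lambda>y. (- lam) * g y) ^^ Suc j) (g x) = g (lam ^ Suc j * x)"
      using Suc hj by simp
  qed
qed

lemma iter_deriv_ex:
  fixes g :: "real \<Rightarrow> real" and lam :: real
  assumes lam: "lam > 1" and fe: "\<forall>x\<in>{-1..1}. g x = - lam * g (g (- x / lam))"
    and ev: "\<forall>x\<in>{-1..1}. g (- x) = g x" and img: "\<forall>x\<in>{-1..1}. g x \<in> {-1..1}"
    and dg: "\<forall>x\<in>{-1..1}. (g has_real_derivative deriv g x) (at x)"
  shows "\<forall>x. \<bar>lam^j * x\<bar> \<le> 1 \<longrightarrow> (\<exists>D. (((\<lambda>y. (- lam) * g y) ^^ j) \<circ> g has_real_derivative D) (at x))"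
proof (induction j)
  case 0
  then show ?case using dg by (auto simp: abs_le_iff)
next
  case (Suc j)
  show ?case
  proof (intro allI impI)
    fix x assume h: "\<bar>lam ^ Suc j * x\<bar> \<le> 1"
    have "\<bar>lam ^ j * x\<bar> \<le> \<bar>lam ^ Suc j * x\<bar>"
      using lam by (simp add: abs_mult mult_right_mono)
    then have hj: "\<bar>lam ^ j * x\<bar> \<le> 1" using h by linarith
    obtain D where D: "(((\<lambda>y. (- lam) * g y) ^^ j) \<circ> g has_real_derivative D) (at x)"
      using Suc hj by blast
    have P: "(((\<lambda>y. (- lam) * g y) ^^ j) \<circ> g) x = g (lam ^ j * x)"
      using iter_eq[OF lam fe ev] hj by simp
    have Pin: "g (lam ^ j * x) \<in> {-1..1}" using img hj by (auto simp: abs_le_iff)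
    define T where "T = (\<lambda>y. (- lam) * g y)"
    define F where "F = (T ^^ j) \<circ> g"
    have DF: "(F has_real_derivative D) (at x)" using D unfolding F_def T_def .
    have PF: "F x = g (lam ^ j * x)" using P unfolding F_def T_def .
    have "(T has_real_derivative (- lam) * deriv g (g (lam ^ j * x))) (at (g (lam ^ j * x)))"
      unfolding T_def using dg Pin by (intro DERIV_cmult) auto
    then have "(T has_real_derivative (- lam) * deriv g (g (lam ^ j * x))) (at (F x))"
      using PF by simp
    from DERIV_chain2[OF this DF]
    have "((\<lambda>t. T (F t)) has_real_derivative (- lam) * deriv g (g (lam ^ j * x)) * D) (at x)" .
    moreover have "(\<lambda>t. T (F t)) = (T ^^ Suc j) \<circ> g"
      by (simp add: fun_eq_iff F_def)
    ultimately show "\<exists>D. (((\<lambda>y. (- lam) * g y) ^^ Suc j) \<circ> g has_real_derivative D) (at x)"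
      unfolding T_def by auto
  qed
qed

lemma iter_deriv:
  fixes g :: "real \<Rightarrow> real" and lam :: real
  assumes lam: "lam > 1" and fe: "\<forall>x\<in>{-1..1}. g x = - lam * g (g (- x / lam))"
    and ev: "\<forall>x\<in>{-1..1}. g (- x) = g x" and img: "\<forall>x\<in>{-1..1}. g x \<in> {-1..1}"
    and dg: "\<forall>x\<in>{-1..1}. (g has_real_derivative deriv g x) (at x)"
    and hx: "\<bar>lam^j * x\<bar> \<le> 1"
  shows "deriv (((\<lambda>y. (- lam) * g y) ^^ j) \<circ> g) x = lam^j * deriv g (lam^j * x)"
proof -
  obtain D where D: "(((\<lambda>y. (- lam) * g y) ^^ j) \<circ> g has_real_derivative D) (at x)"
    using iter_deriv_ex[OF lam fe ev img dg] hx by blast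
  have lp: "lam ^ j > 0" using lam by simp
  have "((\<lambda>t. lam ^ j * t) has_real_derivative lam ^ j) (at x)" by (rule DERIV_cmult_Id)
  moreover have "(g has_real_derivative deriv g (lam ^ j * x)) (at (lam ^ j * x))"
    using dg hx by (auto simp: abs_le_iff)
  ultimately have H: "((\<lambda>t. g (lam ^ j * t)) has_real_derivative deriv g (lam ^ j * x) * lam ^ j) (at x)"
    using DERIV_chain2 by blast
  have "D = deriv g (lam ^ j * x) * lam ^ j"
  proof (rule deriv_agree[OF D H, of "- (1 / lam ^ j)" "1 / lam ^ j"])
    show "- (1 / lam ^ j) < 1 / lam ^ j" using lp by simp
    show "x \<in> {- (1 / lam ^ j)..1 / lam ^ j}"
      using hx lp by (auto simp: abs_le_iff field_simps)
    fix y assume y: "y \<in> {- (1 / lam ^ j)..1 / lam ^ j}"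
    have "\<bar>lam ^ j * y\<bar> \<le> 1"
      using y lp by (auto simp: abs_le_iff field_simps abs_mult)
    then show "(((\<lambda>y. (- lam) * g y) ^^ j) \<circ> g) y = g (lam ^ j * y)"
      using iter_eq[OF lam fe ev] by simp
  qed
  then show ?thesis using DERIV_imp_deriv[OF D] by simp
qed

theorem mainTheorem9:
  fixes lam :: real and g :: "real \<Rightarrow> real"
  assumes "feigenbaum_fixed_point lam g"
  shows "\<exists>E E'. E > 1 \<and> E' > 1 \<and>
           (\<forall>j::nat. \<forall>x::real. lam powi (- int j - 1) \<le> \<bar>x\<bar> \<and> \<bar>x\<bar> \<le> lam powi (- int j) \<longrightarrow>
              E * lam ^ j \<le> \<bar>deriv (((\<lambda>y. (- lam) * g y) ^^ j) \<circ> g) x\<bar> \<and>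
              \<bar>deriv (((\<lambda>y. (- lam) * g y) ^^ j) \<circ> g) x\<bar> \<le> E' * lam ^ j)"
proof -
  have lamlo: "2.5029 \<le> lam" and fe: "\<forall>x\<in>{-1..1}. g x = - lam * g (g (- x / lam))"
    and an: "analytic_near_interval g" and ev: "\<forall>x\<in>{-1..1}. g (- x) = g x"
    and sch: "\<forall>x\<in>{-1..1}. deriv g x \<noteq> 0 \<longrightarrow> schwarzian g x < 0"
    using assms unfolding feigenbaum_fixed_point_def by auto
  obtain c0 where uni: "unimodal g c0" and cc: "concave_on {- g c0..g c0} g"
      "g (g c0) = - g c0 / lam" "deriv g (g c0) = - lam"
    using assms unfolding feigenbaum_fixed_point_def Let_def by blast
  have lam1: "lam > 1" using lamlo by (simp add: less_le_trans[of 1 "2.5029"])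
  have img: "\<forall>x\<in>{-1..1}. g x \<in> {-1..1}" and gm1: "g (-1) = -1" and Dm1: "deriv g (-1) > 0"
    and g1: "g 1 = -1" and c0in: "c0 \<in> {-1<..<1}" and mx: "\<forall>x\<in>{-1..1}. x \<noteq> c0 \<longrightarrow> g x < g c0"
    and Dc0: "deriv g c0 = 0"
    using uni unfolding unimodal_def by auto
  have dg: "\<forall>x\<in>{-1..1}. (g has_real_derivative deriv g x) (at x)"
    using an_deriv[OF an] by blast
  have c00: "c0 = 0"
  proof (rule ccontr)
    assume "c0 \<noteq> 0"
    then have "g (- c0) < g c0" using mx c0in by auto
    moreover have "g (- c0) = g c0" using ev c0in by auto
    ultimately show False by simp
  qed
  define c1 where "c1 = g 0"
  define D where "D = deriv g"
  have cv: "concave_on {- c1..c1} g" and gc1: "g c1 = - c1 / lam" and Dc1: "D c1 = - lam"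
    using cc c00 unfolding c1_def D_def by auto
  have D0: "D 0 = 0" using Dc0 c00 D_def by simp
  have gmax: "\<forall>x\<in>{-1..1}. g x \<le> c1"
    using mx c00 unfolding c1_def by (metis order.order_iff_strict)
  have gmaxs: "\<forall>x\<in>{-1..1}. x \<noteq> 0 \<longrightarrow> g x < c1"
    using mx c00 unfolding c1_def by auto
  have c1in: "c1 \<in> {-1..1}" using img unfolding c1_def by auto
  have c1pos: "c1 > 0"
  proof (rule ccontr)
    assume "\<not> c1 > 0"
    have "g c1 \<le> c1" using gmax c1in by auto
    then have "- c1 / lam \<le> c1" using gc1 by simp
    then have "- c1 \<le> lam * c1" using lam1 by (simp add: field_simps)
    then have "c1 = 0" using \<open>\<not> c1 > 0\<close> lam1
      by (smt (verit) mult_nonneg_nonpos)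
    then show False using Dc1 D0 lam1 by simp
  qed
  have c1lt: "c1 < 1"
  proof (rule ccontr)
    assume "\<not> c1 < 1"
    then have "c1 = 1" using c1in by auto
    then have "g 1 = - 1 / lam" using gc1 by simp
    then show False using g1 lam1 by (simp add: field_simps)
  qed
  have Dodd: "\<forall>y\<in>{-1..1}. D (- y) = - D y"
  proof
    fix y :: real assume y: "y \<in> {-1..1}"
    have "((\<lambda>t. - t) has_real_derivative -1) (at y)"
      by (intro derivative_eq_intros) auto
    moreover have "(g has_real_derivative D (- y)) (at (- y))" using dg y unfolding D_def by auto
    ultimately have "((\<lambda>t. g (- t)) has_real_derivative D (- y) * -1) (at y)"
      using DERIV_chain2 by blast
    moreover have "(g has_real_derivative D y) (at y)" using dg y unfolding D_def by auto
    ultimately have "D (- y) * -1 = D y"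
      by (rule deriv_agree[where a="-1" and b=1]) (use y ev in auto)
    then show "D (- y) = - D y" by simp
  qed
  have Dfe: "\<forall>u. \<bar>lam * u\<bar> \<le> 1 \<longrightarrow> D (lam * u) = - D (g u) * D u"
  proof (intro allI impI)
    fix u assume hu: "\<bar>lam * u\<bar> \<le> 1"
    have "\<bar>u\<bar> \<le> \<bar>lam * u\<bar>" using lam1 mult_right_mono[of 1 lam "\<bar>u\<bar>"] by (simp add: abs_mult)
    then have u1: "u \<in> {-1..1}" using hu by (auto simp: abs_le_iff)
    have gu1: "g u \<in> {-1..1}" using img u1 by auto
    have lu1: "lam * u \<in> {-1..1}" using hu by (auto simp: abs_le_iff)
    have "(g has_real_derivative D (g u)) (at (g u))" using dg gu1 unfolding D_def by auto
    moreover have "(g has_real_derivative D u) (at u)" using dg u1 unfolding D_def by auto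
    ultimately have "((\<lambda>t. g (g t)) has_real_derivative D (g u) * D u) (at u)"
      by (rule DERIV_chain2)
    then have f1: "((\<lambda>t. - lam * g (g t)) has_real_derivative - lam * (D (g u) * D u)) (at u)"
      by (rule DERIV_cmult)
    have "(g has_real_derivative D (lam * u)) (at (lam * u))" using dg lu1 unfolding D_def by auto
    moreover have "((\<lambda>t. lam * t) has_real_derivative lam) (at u)" by (rule DERIV_cmult_Id)
    ultimately have f2: "((\<lambda>t. g (lam * t)) has_real_derivative D (lam * u) * lam) (at u)"
      by (rule DERIV_chain2)
    have "- lam * (D (g u) * D u) = D (lam * u) * lam"
    proof (rule deriv_agree[OF f1 f2, of "- (1/lam)" "1/lam"])
      show "- (1 / lam) < 1 / lam" using lam1 by simp
      show "u \<in> {- (1 / lam)..1 / lam}" using hu lam1 by (auto simp: abs_le_iff field_simps)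
      fix y assume y: "y \<in> {- (1 / lam)..1 / lam}"
      have "\<bar>lam ^ 1 * y\<bar> \<le> 1" using y lam1 by (auto simp: abs_le_iff field_simps abs_mult)
      then show "- lam * g (g y) = g (lam * y)"
        using iter_eq[OF lam1 fe ev, of 1] by auto
    qed
    then have "lam * D (lam * u) = lam * (- D (g u) * D u)" by (simp add: algebra_simps)
    moreover have "lam \<noteq> 0" using lam1 by simp
    ultimately show "D (lam * u) = - D (g u) * D u" by (metis mult_left_cancel)
  qed
  have sec: "\<And>x y. - c1 \<le> x \<Longrightarrow> x < y \<Longrightarrow> y \<le> c1 \<Longrightarrow>
      (g y - g x) / (y - x) \<le> D x \<and> D y \<le> (g y - g x) / (y - x)"
  proof -
    fix x y :: real assume h: "- c1 \<le> x" "x < y" "y \<le> c1"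
    have "x \<in> {-1..1}" "y \<in> {-1..1}" using h c1lt by auto
    then have "(g has_real_derivative D x) (at x)" "(g has_real_derivative D y) (at y)"
      using dg unfolding D_def by auto
    from concave_secant[OF cv h this]
    show "(g y - g x) / (y - x) \<le> D x \<and> D y \<le> (g y - g x) / (y - x)" by blast
  qed
  have Dmono: "\<And>x y. - c1 \<le> x \<Longrightarrow> x \<le> y \<Longrightarrow> y \<le> c1 \<Longrightarrow> D y \<le> D x"
    using sec by (metis order.order_iff_strict order.trans)
  have Drange: "\<And>y. 0 \<le> y \<Longrightarrow> y \<le> c1 \<Longrightarrow> - lam \<le> D y \<and> D y \<le> 0"
    using Dmono[of 0] Dmono[of _ c1] D0 Dc1 c1pos by fastforce
  have gdec: "\<And>x y. 0 \<le> x \<Longrightarrow> x \<le> y \<Longrightarrow> y \<le> c1 \<Longrightarrow> g y \<le> g x"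
  proof -
    fix x y :: real assume h: "0 \<le> x" "x \<le> y" "y \<le> c1"
    show "g y \<le> g x"
    proof (cases "x = y")
      case False
      then have "x < y" using h by simp
      then have "(g y - g x) / (y - x) \<le> D x" using sec h c1pos by auto
      also have "D x \<le> 0" using Drange h by auto
      finally show ?thesis using \<open>x < y\<close> by (simp add: divide_le_0_iff)
    qed simp
  qed
  define u0 where "u0 = c1 / lam"
  have u0pos: "u0 > 0" using c1pos lam1 unfolding u0_def by simp
  have c1u0: "c1 = lam * u0" using lam1 unfolding u0_def by simp
  have u0c1: "u0 < c1" using c1u0 u0pos lam1 by simp
  have u0p: "u0 \<le> 1 / lam" using c1lt lam1 unfolding u0_def by (simp add: divide_right_mono)
  define z where "z = g u0"
  have u0in: "u0 \<in> {-1..1}" using u0pos u0c1 c1lt by auto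
  have gz: "g z = u0 / lam"
  proof -
    have "g c1 = - lam * g (g (- c1 / lam))" using fe c1in by auto
    moreover have "g (- c1 / lam) = z" using ev u0in unfolding z_def u0_def by (metis minus_divide_left)
    ultimately have "- c1 / lam = - lam * g z" using gc1 by simp
    then show ?thesis using lam1 unfolding u0_def by (simp add: field_simps)
  qed
  have DzDu0: "D z * D u0 = lam"
  proof -
    have "\<bar>lam * u0\<bar> \<le> 1" using c1u0 c1lt c1pos by simp
    then have "D (lam * u0) = - D (g u0) * D u0" using Dfe by blast
    then show ?thesis using Dc1 c1u0 unfolding z_def by simp
  qed
  have zle: "z \<le> c1" using gmax u0in unfolding z_def by auto
  have zge': "- u0 \<le> z" using gdec[of u0 c1] u0pos u0c1 gc1 c1u0 lam1 unfolding z_def by (simp add: field_simps)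
  have zge: "u0 \<le> z"
  proof (rule ccontr)
    assume "\<not> u0 \<le> z"
    then have zu: "z < u0" by simp
    have absz: "\<bar>D z\<bar> \<le> - D u0"
    proof (cases "0 \<le> z")
      case True
      then show ?thesis using Dmono[of z u0] Drange[of z] zu u0c1 c1pos by auto
    next
      case False
      have "z \<in> {-1..1}" using zge' u0in zu by auto
      then have "D (- z) = - D z" using Dodd by auto
      moreover have "D u0 \<le> D (- z)" "D (- z) \<le> 0"
        using Dmono[of "- z" u0] Drange[of "- z"] zge' False u0c1 c1pos by auto
      ultimately show ?thesis by auto
    qed
    define A where "A = - D u0"
    have A0: "0 \<le> A" using Drange[of u0] u0pos u0c1 unfolding A_def by auto
    have "lam \<le> \<bar>D z\<bar> * \<bar>D u0\<bar>" using DzDu0 by (metis abs_ge_self abs_mult)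
    also have "\<dots> \<le> A * A"
    proof -
      have "\<bar>D u0\<bar> = A" using A0 unfolding A_def by simp
      moreover have "\<bar>D z\<bar> \<le> A" using absz unfolding A_def .
      ultimately show ?thesis using A0 mult_right_mono[of "\<bar>D z\<bar>" A A] by simp
    qed
    finally have lA: "lam \<le> A * A" .
    have "(g c1 - g u0) / (c1 - u0) \<le> D u0" using sec[of u0 c1] u0pos u0c1 c1pos by auto
    then have "(- u0 - z) / ((lam - 1) * u0) \<le> - A"
      using gc1 c1u0 lam1 unfolding A_def z_def by (simp add: algebra_simps)
    moreover have "(lam - 1) * u0 > 0" using lam1 u0pos by simp
    ultimately have "A * ((lam - 1) * u0) \<le> u0 + z" by (simp add: field_simps)
    also have "\<dots> < 2 * u0" using zu by simp
    finally have "(A * (lam - 1)) * u0 < 2 * u0" by (simp add: algebra_simps)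
    then have A2: "A * (lam - 1) < 2" using u0pos by simp
    have l1: "lam - 1 \<ge> 1.5" using lamlo by simp
    have "lam * (lam - 1) * (lam - 1) \<le> (A * A) * (lam - 1) * (lam - 1)"
      using lA lam1 by (simp add: mult_right_mono)
    also have "\<dots> = (A * (lam - 1)) * (A * (lam - 1))" by (simp add: algebra_simps)
    also have "\<dots> < 2 * 2"
      using A2 A0 lam1 by (intro mult_strict_mono) auto
    finally have lt4: "lam * (lam - 1) * (lam - 1) < 4" by simp
    have lp: "2.5 \<le> lam" using lamlo by simp
    have m1: "2.5 * 1.5 \<le> lam * (lam - 1)"
      by (rule mult_mono) (use lp l1 in auto)
    have m2: "0 \<le> lam * (lam - 1)" using lam1 by simp
    have "(2.5 * 1.5) * 1.5 \<le> (lam * (lam - 1)) * (lam - 1)"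
      by (rule mult_mono[OF m1 l1]) (use m2 in auto)
    then show False using lt4 by linarith
  qed
  define A where "A = - D u0"
  have DzA: "(- D z) * A = lam" using DzDu0 unfolding A_def by simp
  have Dzr: "- lam \<le> D z \<and> D z \<le> 0" using Drange[of z] zge zle u0pos by auto
  have A1: "A > 1"
  proof (rule ccontr)
    assume "\<not> A > 1"
    then have Ale: "A \<le> 1" by simp
    have A0: "0 \<le> A" using Drange[of u0] u0pos u0c1 unfolding A_def by auto
    have "lam = (- D z) * A" using DzA by simp
    also have "\<dots> \<le> (- D z)" by (rule mult_left_le) (use Ale Dzr in auto)
    finally have Dzl: "D z = - lam" using Dzr by simp
    have zc: "z < c1"
    proof -
      have "u0 \<noteq> 0" using u0pos by simp
      then have "g u0 < c1" using gmaxs u0in by auto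
      then show ?thesis unfolding z_def .
    qed
    have cst: "\<And>t. t \<in> {z<..<c1} \<Longrightarrow> D t = - lam"
    proof -
      fix t assume t: "t \<in> {z<..<c1}"
      have "D c1 \<le> D t" "D t \<le> D z" using Dmono[of t c1] Dmono[of z t] t zge u0pos by auto
      then show "D t = - lam" using Dc1 Dzl by simp
    qed
    have d2: "\<And>t. t \<in> {z<..<c1} \<Longrightarrow> deriv D t = 0"
      by (rule deriv_loc_const[OF open_greaterThanLessThan]) (use cst in auto)
    define m where "m = (z + c1) / 2"
    have m: "m \<in> {z<..<c1}" using zc unfolding m_def by auto
    have d3: "deriv (deriv D) m = 0"
      by (rule deriv_loc_const[OF open_greaterThanLessThan m]) (use d2 in auto)
    have d2m: "deriv D m = 0" using d2 m by auto
    have Dm: "D m = - lam" using cst m by auto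
    have min: "m \<in> {-1..1}" using m zge u0pos c1lt by auto
    have "schwarzian g m = 0"
      
    proof -
      have f3: "(deriv ^^ 3) g = deriv (deriv D)" unfolding D_def
        by (simp only: numeral_3_eq_3 funpow.simps o_apply id_apply)
      have f2: "(deriv ^^ 2) g = deriv D" unfolding D_def
        by (simp only: numeral_2_eq_2 funpow.simps o_apply id_apply)
      have "schwarzian g m = deriv (deriv D) m / D m - 3/2 * (deriv D m / D m)^2"
        unfolding schwarzian_def f3 f2 D_def ..
      also have "\<dots> = 0" unfolding d3 d2m by simp
      finally show ?thesis .
    qed
    moreover have "schwarzian g m < 0"
    proof -
      have "deriv g m \<noteq> 0" using Dm lam1 unfolding D_def by simp
      then show ?thesis using sch min by blast
    qed
    ultimately show False by simp
  qed
  define p where "p = 1 / lam"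
  define q where "q = g p"
  have ppos: "p > 0" using lam1 unfolding p_def by simp
  have pin: "p \<in> {-1..1}"
  proof -
    have "0 < 1 / lam" "1 / lam \<le> 1" using lam1 by auto
    then show ?thesis unfolding p_def atLeastAtMost_iff by linarith
  qed
  have gq: "g q = p"
  proof -
    have "g 1 = - lam * g (g (- 1 / lam))" using fe by auto
    moreover have "g (- 1 / lam) = q"
    proof -
      have "- 1 / lam = - p" unfolding p_def by simp
      then show ?thesis using ev pin unfolding q_def by auto
    qed
    ultimately have "-1 = - lam * g q" using g1 by simp
    then show ?thesis using lam1 unfolding p_def by (simp add: field_simps)
  qed
  have qin: "q \<in> {-1..1}" using img pin unfolding q_def by auto
  have pc1: "p \<le> c1" using gmax qin gq by auto
  have u0p': "u0 \<le> p" using u0p unfolding p_def .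
  have qz: "q \<le> z" using gdec[of u0 p] u0pos u0p' pc1 unfolding q_def z_def by auto
  have gc1u: "g c1 = - u0" using gc1 unfolding u0_def by simp
  have qge: "- u0 \<le> q" using gdec[of p c1] ppos pc1 gc1u unfolding q_def by linarith
  have qpos: "q > 0"
  proof -
    have lp: "lam * (- p) = -1" using lam1 unfolding p_def by simp
    have "\<bar>lam * (- p)\<bar> \<le> 1" unfolding lp by simp
    then have e: "D (lam * (- p)) = - D (g (- p)) * D (- p)" using Dfe by blast
    have gmp: "g (- p) = q" using ev pin unfolding q_def by auto
    have Dmp: "D (- p) = - D p" using Dodd pin by auto
    have "D (-1) = - D q * (- D p)" using e unfolding lp gmp Dmp .
    then have "D (-1) = D q * D p" by simp
    then have pr: "D q * D p > 0" using Dm1 unfolding D_def by simp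
    have "D p \<le> 0" using Drange[of p] ppos pc1 by auto
    have "D q < 0"
    proof (rule ccontr)
      assume "\<not> D q < 0"
      then have "D q * D p \<le> 0" using \<open>D p \<le> 0\<close> by (simp add: mult_nonneg_nonpos)
      then show False using pr by simp
    qed
    show "q > 0"
    proof (rule ccontr)
      assume "\<not> q > 0"
      then have "D 0 \<le> D q" using Dmono[of q 0] qge u0c1 c1pos by auto
      then show False using D0 \<open>D q < 0\<close> by simp
    qed
  qed
  have qu0: "u0 \<le> q"
  proof (rule ccontr)
    assume "\<not> u0 \<le> q"
    then have qu: "q < u0" by simp
    have "g u0 \<le> g q" using gdec[of q u0] qpos qu u0c1 by auto
    then have zp: "z \<le> p" using gq unfolding z_def by simp
    define w where "w = u0 / lam"
    have wpos: "w > 0" using u0pos lam1 unfolding w_def by simp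
    have wu0: "w \<le> u0" using u0pos lam1 unfolding w_def by (simp add: divide_le_eq)
    have "g p \<le> g z" using gdec[of z p] zge u0pos zp pc1 by auto
    then have qw: "q \<le> w" using gz unfolding q_def w_def by simp
    define v where "v = g w"
    have "g w \<le> g q" using gdec[of q w] qpos qw wu0 u0c1 by auto
    then have vp: "v \<le> p" using gq unfolding v_def by simp
    have "g u0 \<le> g w" using gdec[of w u0] wpos wu0 u0c1 by auto
    then have vz: "z \<le> v" unfolding v_def z_def .
    have "g p \<le> g v" using gdec[of v p] vz zge u0pos vp pc1 by auto
    then have gvq: "q \<le> g v" unfolding q_def .
    have "g u0 = - lam * g (g (- u0 / lam))" using fe u0in by auto
    moreover have "g (- u0 / lam) = v"
    proof -
      have "- u0 / lam = - w" unfolding w_def by simp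
      moreover have "w \<in> {-1..1}" using wpos wu0 u0in by auto
      ultimately show ?thesis using ev unfolding v_def by auto
    qed
    ultimately have "z = - lam * g v" unfolding z_def by simp
    have "g v < 0"
    proof (rule ccontr)
      assume "\<not> g v < 0"
      then have "- lam * g v \<le> 0" using lam1 by (simp add: mult_nonpos_nonneg)
      then show False using \<open>z = - lam * g v\<close> zge u0pos by simp
    qed
    then show False using gvq qpos by simp
  qed
  have Dbnd0: "\<And>y. p \<le> y \<Longrightarrow> y \<le> 1 \<Longrightarrow> A \<le> \<bar>D y\<bar> \<and> \<bar>D y\<bar> \<le> lam ^ 2"
  proof -
    fix y assume y: "p \<le> y" "y \<le> 1"
    have inr: "A \<le> - D t \<and> - D t \<le> lam" if t: "u0 \<le> t" "t \<le> c1" for t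
    proof -
      have "D t \<le> D u0" using Dmono[of u0 t] t u0pos c1pos by linarith
      moreover have "D c1 \<le> D t" using Dmono[of t c1] t u0pos c1pos by linarith
      ultimately show ?thesis using Dc1 unfolding A_def by linarith
    qed
    have lam2: "lam \<le> lam ^ 2" using lam1 by (simp add: power2_eq_square)
    show "A \<le> \<bar>D y\<bar> \<and> \<bar>D y\<bar> \<le> lam ^ 2"
    proof (cases "y \<le> c1")
      case True
      then have "A \<le> - D y \<and> - D y \<le> lam" using inr y u0p' by auto
      then show ?thesis using lam2 A1 by auto
    next
      case False
      define u where "u = y / lam"
      have yu: "y = lam * u" using lam1 unfolding u_def by simp
      have uu0: "u0 \<le> u" using False lam1 unfolding u_def u0_def by (simp add: divide_right_mono)
      have up: "u \<le> p" using y lam1 unfolding u_def p_def by (simp add: divide_right_mono)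
      have "\<bar>lam * u\<bar> \<le> 1" using yu y ppos by auto
      then have Dy: "D y = - D (g u) * D u" using Dfe yu by simp
      have gu1: "q \<le> g u" using gdec[of u p] uu0 up u0pos pc1 unfolding q_def by auto
      have gu2: "g u \<le> z" using gdec[of u0 u] uu0 up u0pos pc1 unfolding z_def by auto
      have i1: "A \<le> - D u \<and> - D u \<le> lam" using inr uu0 up pc1 by auto
      have i2: "A \<le> - D (g u) \<and> - D (g u) \<le> lam" using inr gu1 gu2 qu0 zle by auto
      have "0 \<le> D (g u) * D u" using i1 i2 A1 by (intro mult_nonpos_nonpos) auto
      then have "\<bar>D y\<bar> = (- D (g u)) * (- D u)" using Dy by simp
      moreover have "A * A \<le> (- D (g u)) * (- D u)" using i1 i2 A1 by (intro mult_mono) auto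
      moreover have "(- D (g u)) * (- D u) \<le> lam * lam" using i1 i2 A1 by (intro mult_mono) auto
      moreover have "A \<le> A * A" using A1 by simp
      ultimately show ?thesis by (simp add: power2_eq_square)
    qed
  qed
  have Dbnd: "\<And>y. p \<le> \<bar>y\<bar> \<Longrightarrow> \<bar>y\<bar> \<le> 1 \<Longrightarrow> A \<le> \<bar>D y\<bar> \<and> \<bar>D y\<bar> \<le> lam ^ 2"
  proof -
    fix y :: real assume y: "p \<le> \<bar>y\<bar>" "\<bar>y\<bar> \<le> 1"
    show "A \<le> \<bar>D y\<bar> \<and> \<bar>D y\<bar> \<le> lam ^ 2"
    proof (cases "0 \<le> y")
      case True
      then show ?thesis using Dbnd0 y by auto
    next
      case False
      then have "D (- y) = - D y" using Dodd y by auto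
      then show ?thesis using Dbnd0[of "- y"] y False by auto
    qed
  qed
  have img2: "\<forall>x\<in>{-1..1}. g x \<in> {-1..1}" using img .
  show ?thesis
  proof (intro exI conjI allI impI)
    show "A > 1" by (rule A1)
    show "lam ^ 2 > 1" using less_1_mult[OF lam1 lam1] by (simp add: power2_eq_square)
    fix j :: nat and x :: real
    assume hx: "lam powi (- int j - 1) \<le> \<bar>x\<bar> \<and> \<bar>x\<bar> \<le> lam powi (- int j)"
    have lj: "lam ^ j > 0" using lam1 by simp
    have e1: "lam powi (- int j) = 1 / lam ^ j"
      by (simp add: power_int_minus divide_inverse)
    have e2: "lam powi (- int j - 1) = 1 / lam ^ Suc j"
    proof -
      have "- int j - 1 = - int (Suc j)" by simp
      then have "lam powi (- int j - 1) = inverse (lam powi int (Suc j))"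
        by (simp only: power_int_minus)
      also have "\<dots> = 1 / lam ^ Suc j" by (simp only: power_int_of_nat inverse_eq_divide)
      finally show ?thesis .
    qed
    have h1: "1 / lam ^ Suc j \<le> \<bar>x\<bar>" and h2: "\<bar>x\<bar> \<le> 1 / lam ^ j" using hx e1 e2 by auto
    define y where "y = lam ^ j * x"
    have ay: "\<bar>y\<bar> = lam ^ j * \<bar>x\<bar>" using lj unfolding y_def by (simp add: abs_mult)
    have y1: "\<bar>y\<bar> \<le> 1" using h2 lj ay by (simp add: field_simps)
    have yp: "p \<le> \<bar>y\<bar>"
    proof -
      have "lam ^ j * (1 / lam ^ Suc j) \<le> lam ^ j * \<bar>x\<bar>" by (rule mult_left_mono) (use h1 lj in auto)
      moreover have "lam ^ j * (1 / lam ^ Suc j) = p" using lam1 unfolding p_def by (simp add: field_simps)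
      ultimately show ?thesis using ay by simp
    qed
    have dd: "deriv (((\<lambda>y. (- lam) * g y) ^^ j) \<circ> g) x = lam ^ j * D y"
      using iter_deriv[OF lam1 fe ev img2 dg] y1 unfolding y_def D_def by simp
    have ab: "\<bar>deriv (((\<lambda>y. (- lam) * g y) ^^ j) \<circ> g) x\<bar> = lam ^ j * \<bar>D y\<bar>"
      using dd lj by (simp add: abs_mult)
    have B: "A \<le> \<bar>D y\<bar>" "\<bar>D y\<bar> \<le> lam ^ 2" using Dbnd[OF yp y1] by auto
    show "A * lam ^ j \<le> \<bar>deriv (((\<lambda>y. (- lam) * g y) ^^ j) \<circ> g) x\<bar>"
      using ab B lj by (simp add: mult.commute mult_left_mono)
    show "\<bar>deriv (((\<lambda>y. (- lam) * g y) ^^ j) \<circ> g) x\<bar> \<le> lam ^ 2 * lam ^ j"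
      using ab B lj by (simp add: mult.commute mult_left_mono)
  qed
qed

end
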